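(* Let $1\le k\le n-1$, let $I,J$ be tightly $r$-interlacing $k$-subsets of $\{1,\dots,n\}$, write $I\setminus J=\{i_1,\dots,i_r\}$ and $J\setminus I=\{j_1,\dots,j_r\}$ with $1\le i_1<j_1<i_2<j_2<\dots<i_r<j_r\le n$, and let $b_1,\dots,b_{2r}\in\mathbb{C}[[t]]$ satisfy $\sum_{l=1}^{2r}b_l=0$. Then the module $\mathbb{M}(I,J)$ (defined in the context) is a maximal Cohen–Macaulay $B_{k,n}$-module, i.e.\ it lies in $\mathrm{CM}(B_{k,n})$.
   Context: Let $\Gamma_n$ be the quiver with vertices $1,\dots,n$ arranged on a cycle (vertex $0$ is identified with vertex $n$) and arrows $x_i\colon i-1\to i$, $y_i\colon i\to i-1$ for $i=1,\dots,n$. The algebra $B_{k,n}$ is the completed path algebra of $\Gamma_n$ modulo the closure of the ideal generated by the relations $xy=yx$ and $x^k=y^{n-k}$ at every vertex. Its centre is $Z=\mathbb{C}[[t]]$ with $t=\sum_i x_iy_i$. $\mathrm{CM}(B_{k,n})$ denotes the category of (maximal) Cohen–Macaulay $B_{k,n}$-modules, which are exactly the $B_{k,n}$-modules that are free of finite rank over $Z$; such a module is a representation of $\Gamma_n$ with a free $Z$-module of the same rank at each vertex. Two $k$-subsets $I,J$ of $\{1,\dots,n\}$ are $r$-interlacing if there are $\{i_1,i_3,\dots,i_{2r-1}\}\subset I\setminus J$ and $\{i_2,i_4,\dots,i_{2r}\}\subset J\setminus I$ with $i_1<i_2<\dots<i_{2r}<i_1$ cyclically, and no larger subsets with this property; they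 are tightly $r$-interlacing if moreover $|I\cap J|=k-r$. The module $\mathbb{M}(I,J)$: at each vertex put $V_i=\mathbb{C}[[t]]\oplus\mathbb{C}[[t]]$; for $l=1,\dots,r$ set $x_{i_l}=\begin{pmatrix}t&b_{2l-1}\\0&1\end{pmatrix}$, $y_{i_l}=\begin{pmatrix}1&-b_{2l-1}\\0&t\end{pmatrix}$, $x_{j_l}=\begin{pmatrix}1&b_{2l}\\0&t\end{pmatrix}$, $y_{j_l}=\begin{pmatrix}t&-b_{2l}\\0&1\end{pmatrix}$; for $i\notin I\cup J$ set $x_i=tE$, $y_i=E$; for $i\in I\cap J$ set $x_i=E$, $y_i=tE$, where $E$ is the $2\times2$ identity matrix. *)

theory Defs
  imports "HOL-Analysis.Analysis" "HOL-Computational_Algebra.Formal_Power_Series"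
begin

text \<open>Vertices of the cyclic quiver Gamma_n are 1..n; vertex 0 is identified with n.
  cyc n m is the representative in 1..n of m modulo n.\<close>
definition cyc :: "nat \<Rightarrow> nat \<Rightarrow> nat" where
  "cyc n m = (if m mod n = 0 then n else m mod n)"

text \<open>A representation of Gamma_n by free C[[t]]-modules of rank CARD('m) at every vertex:
  X i is the matrix of x_i : V_(i-1) -> V_i, Y i the matrix of y_i : V_i -> V_(i-1)
  (matrices act on column vectors).\<close>
type_synonym 'm zmat = "complex fps ^'m^'m"

fun xpath :: "nat \<Rightarrow> (nat \<Rightarrow> 'm::finite zmat) \<Rightarrow> nat \<Rightarrow> nat \<Rightarrow> 'm zmat" where
  "xpath n X i 0 = mat 1"
| "xpath n X i (Suc m) = X (cyc n (i + Suc m)) ** xpath n X i m"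

fun ypath :: "nat \<Rightarrow> (nat \<Rightarrow> 'm::finite zmat) \<Rightarrow> nat \<Rightarrow> nat \<Rightarrow> 'm zmat" where
  "ypath n Y i 0 = mat 1"
| "ypath n Y i (Suc m) = Y (cyc n (i + n - m mod n)) ** ypath n Y i m"

text \<open>Cohen--Macaulay B_{k,n}-modules, described as in the paper as representations of Gamma_n
  with a free Z = C[[t]]-module of the same rank at each vertex, satisfying the relations
  xy = yx and x^k = y^(n-k) at every vertex, and on which the central element
  t = sum x_i y_i acts as multiplication by the variable t of C[[t]].\<close>
definition CM_rep :: "nat \<Rightarrow> nat \<Rightarrow> (nat \<Rightarrow> 'm::finite zmat) \<Rightarrow> (nat \<Rightarrow> 'm zmat) \<Rightarrow> bool" where
  "CM_rep k n X Y \<longleftrightarrow>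
     (\<forall>i\<in>{1..n}. X i ** Y i = Y (cyc n (i+1)) ** X (cyc n (i+1)))
   \<and> (\<forall>i\<in>{1..n}. X i ** Y i = mat fps_X)
   \<and> (\<forall>i\<in>{1..n}. xpath n X i k = ypath n Y i (n - k))"

definition cyclically_ordered :: "nat \<Rightarrow> (nat \<Rightarrow> nat) \<Rightarrow> bool" where
  "cyclically_ordered m a \<longleftrightarrow> m = 0 \<or>
     (\<exists>s<m. \<forall>p q. p < q \<and> q < m \<longrightarrow> a (1 + (p + s) mod m) < a (1 + (q + s) mod m))"

definition interlace_witness :: "nat set \<Rightarrow> nat set \<Rightarrow> nat \<Rightarrow> bool" where
  "interlace_witness I J r \<longleftrightarrow> (\<exists>a :: nat \<Rightarrow> nat.
     (\<forall>l\<in>{1..r}. a (2*l - 1) \<in> I - J \<and> a (2*l) \<in> J - I) \<and> cyclically_ordered (2*r) a)"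

definition r_interlacing :: "nat \<Rightarrow> nat set \<Rightarrow> nat set \<Rightarrow> bool" where
  "r_interlacing r I J \<longleftrightarrow> interlace_witness I J r \<and> \<not> interlace_witness I J (Suc r)"

definition tightly_r_interlacing :: "nat \<Rightarrow> nat \<Rightarrow> nat set \<Rightarrow> nat set \<Rightarrow> bool" where
  "tightly_r_interlacing k r I J \<longleftrightarrow> r_interlacing r I J \<and> card (I \<inter> J) = k - r"

definition mat2 :: "'a::zero \<Rightarrow> 'a \<Rightarrow> 'a \<Rightarrow> 'a \<Rightarrow> 'a^2^2" where
  "mat2 a b c d = (\<chi> p q. if p = 1 then (if q = 1 then a else b) else (if q = 1 then c else d))"

abbreviation tE :: "2 zmat" where "tE \<equiv> mat fps_X"
abbreviation E :: "2 zmat" where "E \<equiv> mat 1"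

text \<open>The module M(I,J): iv l = i_l, jv l = j_l (l = 1..r), b l = b_l.\<close>
definition MX :: "nat set \<Rightarrow> nat set \<Rightarrow> nat \<Rightarrow> (nat \<Rightarrow> nat) \<Rightarrow> (nat \<Rightarrow> nat)
     \<Rightarrow> (nat \<Rightarrow> complex fps) \<Rightarrow> nat \<Rightarrow> 2 zmat" where
  "MX I J r iv jv b v =
    (if \<exists>l\<in>{1..r}. v = iv l then
       (let l = (THE l. l \<in> {1..r} \<and> v = iv l) in mat2 fps_X (b (2*l-1)) 0 1)
     else if \<exists>l\<in>{1..r}. v = jv l then
       (let l = (THE l. l \<in> {1..r} \<and> v = jv l) in mat2 1 (b (2*l)) 0 fps_X)
     else if v \<in> I \<inter> J then E
     else tE)"

definition MY :: "nat set \<Rightarrow> nat set \<Rightarrow> nat \<Rightarrow> (nat \<Rightarrow> nat) \<Rightarrow> (nat \<Rightarrow> nat)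
     \<Rightarrow> (nat \<Rightarrow> complex fps) \<Rightarrow> nat \<Rightarrow> 2 zmat" where
  "MY I J r iv jv b v =
    (if \<exists>l\<in>{1..r}. v = iv l then
       (let l = (THE l. l \<in> {1..r} \<and> v = iv l) in mat2 1 (- b (2*l-1)) 0 fps_X)
     else if \<exists>l\<in>{1..r}. v = jv l then
       (let l = (THE l. l \<in> {1..r} \<and> v = jv l) in mat2 fps_X (- b (2*l)) 0 1)
     else if v \<in> I \<inter> J then tE
     else E)"

end

theory Submission
  imports Defs
begin

lemma two_neq: "(1::2) \<noteq> 2" by simp

lemma mat2_mult: "mat2 a b c d ** mat2 a' b' c' d' =
   mat2 (a*a' + b*c') (a*b' + b*d') (c*a' + d*c') (c*b' + d*d' :: 'a::comm_semiring_1)"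
  unfolding mat2_def matrix_matrix_mult_def
  by (simp add: vec_eq_iff forall_2 sum_2)

lemma mat_mat2: "(mat x :: 'a::zero^2^2) = mat2 x 0 0 x"
  unfolding mat2_def mat_def
  by (simp add: vec_eq_iff forall_2)

lemma mat2_eq: "(mat2 a b c d = mat2 a' b' c' d') \<longleftrightarrow> a = a' \<and> b = b' \<and> c = c' \<and> (d::'a::zero) = d'"
  unfolding mat2_def vec_eq_iff forall_2 by auto

lemma mat2_expand: "(A :: 'a::zero^2^2) = mat2 (A$1$1) (A$1$2) (A$2$1) (A$2$2)"
  unfolding mat2_def vec_eq_iff forall_2 by auto

type_synonym m2 = "complex fps^2^2"

lemma mat_comm: "(mat s :: 'a::comm_semiring_1^2^2) ** (A::'a^2^2) = A ** mat s"
  apply (subst (1 2) mat2_expand[of A])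
  by (simp add: mat_mat2 mat2_mult mult.commute)

lemma mat_mat: "(mat s :: 'a::comm_semiring_1^2^2) ** mat s' = mat (s * s')"
  by (simp add: mat_mat2 mat2_mult)

lemma mat_left: "(mat c :: 'a::comm_semiring_1^2^2) ** A = mat2 (c*A$1$1) (c*A$1$2) (c*A$2$1) (c*A$2$2)"
  apply (subst (1) mat2_expand[of A])
  by (simp add: mat_mat2 mat2_mult)

lemma mat_cancel:
  fixes A B :: m2
  assumes "(mat c :: m2) ** A = mat c ** B" "c \<noteq> 0"
  shows "A = B"
  using assms unfolding mat_left mat2_eq
  by (subst mat2_expand[of A], subst mat2_expand[of B]) simp

lemma xpath_split: "xpath n X i (a+b) = xpath n X (i+a) b ** xpath n X i a"
  by (induction b) (simp_all add: matrix_mul_assoc add.assoc)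

lemma xpath_one: "xpath n X i 1 = X (cyc n (Suc i))"
  by simp

lemma QR:
  fixes X Y :: "nat \<Rightarrow> m2"
  assumes YX: "\<And>v. Y v ** X v = mat fps_X"
  shows "m \<le> n \<Longrightarrow> ypath n Y i m ** xpath n X (i+n-m) m = mat (fps_X^m)"
proof (induction m)
  case 0 then show ?case by simp
next
  case (Suc m)
  let ?c = "cyc n (i + n - m)"
  have mm: "m mod n = m" using Suc.prems by simp
  have "xpath n X (i+n-Suc m) (1 + m) = xpath n X (i+n-Suc m+1) m ** xpath n X (i+n-Suc m) 1"
    by (rule xpath_split)
  also have "i+n-Suc m+1 = i+n-m" using Suc.prems by simp
  also have "xpath n X (i+n-Suc m) 1 = X ?c"
    using Suc.prems by (simp add: Suc_diff_Suc)
  finally have xe: "xpath n X (i+n-Suc m) (Suc m) = xpath n X (i+n-m) m ** X ?c" by simp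
  have "ypath n Y i (Suc m) ** xpath n X (i+n-Suc m) (Suc m)
      = Y ?c ** (ypath n Y i m ** xpath n X (i+n-m) m) ** X ?c"
  proof -
    have "ypath n Y i (Suc m) = Y ?c ** ypath n Y i m" by (simp add: mm)
    then show ?thesis unfolding xe by (simp only: matrix_mul_assoc)
  qed
  also have "\<dots> = Y ?c ** (X ?c ** mat (fps_X^m))"
    using Suc by (simp only: matrix_mul_assoc[symmetric] mat_comm[of "fps_X^m" "X ?c"])
  also have "\<dots> = mat (fps_X^Suc m)"
    by (simp add: matrix_mul_assoc YX mat_mat)
  finally show ?case .
qed

lemma loop_step:
  fixes X :: "nat \<Rightarrow> m2"
  assumes XY: "\<And>v. X v ** Y v = mat fps_X" and n: "0 < n"
    and L: "xpath n X i n = mat c"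
  shows "xpath n X (Suc i) n = mat c"
proof -
  have "xpath n X i (1 + n) = xpath n X (Suc i) n ** X (cyc n (Suc i))"
    using xpath_split[of n X i 1 n] by simp
  moreover have "xpath n X i (n + 1) = X (cyc n (Suc (i + n))) ** mat c"
    using xpath_split[of n X i n 1] L by simp
  moreover have "cyc n (Suc (i + n)) = cyc n (Suc i)"
    unfolding cyc_def by (metis add_Suc mod_add_self2)
  ultimately have e0: "xpath n X (Suc i) n ** X (cyc n (Suc i)) = X (cyc n (Suc i)) ** mat c"
    by (simp add: add.commute)
  have e: "xpath n X (Suc i) n ** X (cyc n (Suc i)) = mat c ** X (cyc n (Suc i))"
    unfolding e0 by (rule mat_comm[symmetric])
  have "xpath n X (Suc i) n ** mat fps_X = mat c ** mat fps_X"
    using arg_cong[OF e, of "\<lambda>A. A ** Y (cyc n (Suc i))"]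
    by (simp add: matrix_mul_assoc[symmetric] XY)
  then have "mat fps_X ** xpath n X (Suc i) n = mat fps_X ** mat c"
    by (metis mat_comm)
  then show ?thesis by (rule mat_cancel) simp
qed

lemma loop_all:
  fixes X :: "nat \<Rightarrow> m2"
  assumes XY: "\<And>v. X v ** Y v = mat fps_X" and n: "0 < n"
    and L: "xpath n X 0 n = mat c"
  shows "xpath n X i n = mat c"
  by (induction i) (use L loop_step[OF XY n] in auto)

lemma main_abstract:
  fixes X Y :: "nat \<Rightarrow> m2"
  assumes XY: "\<And>v. X v ** Y v = mat fps_X" and YX: "\<And>v. Y v ** X v = mat fps_X"
    and n: "0 < n" and k: "k \<le> n"
    and L: "xpath n X 0 n = mat (fps_X^(n-k))"
  shows "xpath n X i k = ypath n Y i (n-k)"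
proof -
  let ?P = "xpath n X i k" and ?Q = "ypath n Y i (n-k)" and ?R = "xpath n X (i+k) (n-k)"
  have QR: "?Q ** ?R = mat (fps_X^(n-k))"
    using QR[OF YX, where m="n-k" and n=n and i=i] k by simp
  have RP: "?R ** ?P = mat (fps_X^(n-k))"
    using xpath_split[of n X i k "n-k"] loop_all[OF XY n L, of i] k by simp
  have "mat (fps_X^(n-k)) ** ?P = mat (fps_X^(n-k)) ** ?Q"
  proof -
    have "mat (fps_X^(n-k)) ** ?P = (?Q ** ?R) ** ?P" using QR by simp
    also have "\<dots> = ?Q ** (?R ** ?P)" by (simp only: matrix_mul_assoc)
    also have "\<dots> = mat (fps_X^(n-k)) ** ?Q" using RP mat_comm by metis
    finally show ?thesis .
  qed
  then show ?thesis by (rule mat_cancel) simp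
qed

lemma cyc_id: "1 \<le> u \<Longrightarrow> u \<le> n \<Longrightarrow> cyc n u = u"
  unfolding cyc_def by (cases "u = n") auto

lemma MXY_all:
  "MX I J r iv jv b v ** MY I J r iv jv b v = mat fps_X"
  "MY I J r iv jv b v ** MX I J r iv jv b v = mat fps_X"
  unfolding MX_def MY_def Let_def
  by (simp_all add: mat_mat2 mat2_mult algebra_simps)

lemma MX21: "MX I J r iv jv b v $ 2 $ 1 = 0"
  unfolding MX_def Let_def mat2_def by (simp add: mat_def)

lemma gap_generic:
  fixes X :: "nat \<Rightarrow> m2"
  shows "(\<forall>j\<in>{1..d}. \<exists>g. X (cyc n (a+j)) = mat g) \<Longrightarrow> \<exists>g. xpath n X a d = mat g"
proof (induction d)
  case 0 then show ?case by (auto intro: exI[of _ 1])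
next
  case (Suc d)
  then obtain g where g: "xpath n X a d = mat g" by force
  have "Suc d \<in> {1..Suc d}" by simp
  then obtain h where h: "X (cyc n (a + Suc d)) = mat h" using Suc.prems by blast
  show ?case using g h by (auto simp: mat_mat)
qed

lemma diag_generic:
  fixes X :: "nat \<Rightarrow> m2"
  assumes "\<And>v. X v $ 2 $ 1 = 0"
  shows "xpath n X a d $ 2 $ 1 = 0 \<and> xpath n X a d $ 1 $ 1 = (\<Prod>j\<in>{1..d}. X (cyc n (a+j)) $ 1 $ 1)
     \<and> xpath n X a d $ 2 $ 2 = (\<Prod>j\<in>{1..d}. X (cyc n (a+j)) $ 2 $ 2)"
proof (induction d)
  case 0 then show ?case by (simp add: mat_def)
next
  case (Suc d)
  have e: "xpath n X a (Suc d) = X (cyc n (a + Suc d)) ** xpath n X a d" by simp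
  show ?case
    unfolding e using Suc assms[of "cyc n (a + Suc d)"]
    apply (subst (1 2 3) mat2_expand[of "X (cyc n (a + Suc d))"])
    apply (subst (1 2 3) mat2_expand[of "xpath n X a d"])
    apply (simp add: mat2_mult)
    apply (simp add: mat2_def prod.cl_ivl_Suc mult.commute)
    done
qed

locale mdat =
  fixes n r :: nat and I J :: "nat set" and iv jv :: "nat \<Rightarrow> nat"
    and b :: "nat \<Rightarrow> complex fps"
  assumes IJ1: "I - J = iv ` {1..r}" and IJ2: "J - I = jv ` {1..r}"
    and ord1: "\<forall>l\<in>{1..r}. 1 \<le> iv l \<and> iv l < jv l \<and> jv l \<le> n"
    and ord2: "\<forall>l\<in>{1..<r}. jv l < iv (Suc l)"
begin

lemma mono_d: "1 \<le> l \<Longrightarrow> l + d \<le> r \<Longrightarrow>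
   iv l \<le> iv (l+d) \<and> jv l \<le> jv (l+d) \<and> (0 < d \<longrightarrow> jv l < iv (l+d))"
proof (induction d)
  case 0 then show ?case by simp
next
  case (Suc d)
  have a: "jv (l+d) < iv (Suc (l+d))" using ord2 Suc.prems by auto
  have b1: "iv (l+d) < jv (l+d)" using ord1 Suc.prems by auto
  have b2: "iv (Suc (l+d)) < jv (Suc (l+d))" using ord1 Suc.prems by auto
  show ?case using Suc a b1 b2 by auto
qed

lemma mono_lt:
  assumes "l \<in> {1..r}" "l' \<in> {1..r}" "l < l'"
  shows "iv l < iv l'" "jv l < jv l'" "jv l < iv l'"
proof -
  have "jv l < iv l'" using mono_d[of l "l'-l"] assms by auto
  moreover have "iv l < jv l" "iv l' < jv l'" using ord1 assms by auto
  ultimately show "iv l < iv l'" "jv l < jv l'" "jv l < iv l'" by auto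
qed

lemma ivjv_lt: "l \<in> {1..r} \<Longrightarrow> iv l < jv l" using ord1 by auto
lemma jv_le: "l \<in> {1..r} \<Longrightarrow> jv l \<le> n" using ord1 by auto
lemma iv_ge: "l \<in> {1..r} \<Longrightarrow> 1 \<le> iv l" using ord1 by auto

lemma iffs:
  assumes a: "l \<in> {1..r}" "l' \<in> {1..r}"
  shows "iv l \<le> iv l' \<longleftrightarrow> l \<le> l'" "jv l \<le> jv l' \<longleftrightarrow> l \<le> l'"
    "iv l < jv l' \<longleftrightarrow> l \<le> l'" "jv l < iv l' \<longleftrightarrow> l < l'"
    "iv l < iv l' \<longleftrightarrow> l < l'" "jv l < jv l' \<longleftrightarrow> l < l'"
proof -
  have c1: "l < l' \<Longrightarrow> iv l < iv l' \<and> jv l < jv l' \<and> jv l < iv l'" using mono_lt[OF a] by simp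
  have c2: "l' < l \<Longrightarrow> iv l' < iv l \<and> jv l' < jv l \<and> jv l' < iv l" using mono_lt[OF a(2,1)] by simp
  have c3: "iv l < jv l" "iv l' < jv l'" using ivjv_lt a by auto
  show "iv l \<le> iv l' \<longleftrightarrow> l \<le> l'" "jv l \<le> jv l' \<longleftrightarrow> l \<le> l'"
    "iv l < jv l' \<longleftrightarrow> l \<le> l'" "jv l < iv l' \<longleftrightarrow> l < l'"
    "iv l < iv l' \<longleftrightarrow> l < l'" "jv l < jv l' \<longleftrightarrow> l < l'"
    using c1 c2 c3 by (cases l l' rule: linorder_cases; simp; linarith)+
qed

lemma iv_inj: "l \<in> {1..r} \<Longrightarrow> l' \<in> {1..r} \<Longrightarrow> iv l = iv l' \<Longrightarrow> l = l'"
  using iffs(5)[of l l'] iffs(5)[of l' l] by (auto simp: linorder_neq_iff)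
lemma jv_inj: "l \<in> {1..r} \<Longrightarrow> l' \<in> {1..r} \<Longrightarrow> jv l = jv l' \<Longrightarrow> l = l'"
  using iffs(6)[of l l'] iffs(6)[of l' l] by (auto simp: linorder_neq_iff)
lemma ivjv_ne: "l \<in> {1..r} \<Longrightarrow> l' \<in> {1..r} \<Longrightarrow> iv l \<noteq> jv l'"
  using IJ1 IJ2 by blast

abbreviation "XX \<equiv> MX I J r iv jv b"

lemma XX_iv: "l \<in> {1..r} \<Longrightarrow> XX (iv l) = mat2 fps_X (b (2*l-1)) 0 1"
proof -
  assume l: "l \<in> {1..r}"
  have "(THE l'. l' \<in> {1..r} \<and> iv l = iv l') = l"
  proof (rule the_equality)
    show "l \<in> {1..r} \<and> iv l = iv l" using l by simp
    fix l' assume "l' \<in> {1..r} \<and> iv l = iv l'"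
    then show "l' = l" using iv_inj[OF l, of l'] by simp
  qed
  moreover have "\<exists>l'\<in>{1..r}. iv l = iv l'" using l by blast
  ultimately show ?thesis unfolding MX_def Let_def by (simp only: if_P)
qed

lemma XX_jv: "l \<in> {1..r} \<Longrightarrow> XX (jv l) = mat2 1 (b (2*l)) 0 fps_X"
proof -
  assume l: "l \<in> {1..r}"
  have "(THE l'. l' \<in> {1..r} \<and> jv l = jv l') = l"
  proof (rule the_equality)
    show "l \<in> {1..r} \<and> jv l = jv l" using l by simp
    fix l' assume "l' \<in> {1..r} \<and> jv l = jv l'"
    then show "l' = l" using jv_inj[OF l, of l'] by simp
  qed
  moreover have "\<not> (\<exists>l'\<in>{1..r}. jv l = iv l')" using l ivjv_ne by metis
  moreover have "\<exists>l'\<in>{1..r}. jv l = jv l'" using l by blast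
  ultimately show ?thesis unfolding MX_def Let_def by (simp only: if_P if_not_P if_False)
qed

lemma XX_other: "v \<notin> iv ` {1..r} \<Longrightarrow> v \<notin> jv ` {1..r} \<Longrightarrow> \<exists>g. XX v = mat g"
  unfolding MX_def by auto

lemma XX_diag: "XX v $ 1 $ 1 = (if v \<in> J then 1 else fps_X) \<and> XX v $ 2 $ 2 = (if v \<in> I then 1 else fps_X)"
proof (cases "v \<in> iv ` {1..r}")
  case True
  then obtain l where l: "l \<in> {1..r}" "v = iv l" by blast
  then have "v \<in> I - J" using IJ1 by blast
  then show ?thesis using XX_iv[OF l(1)] l(2) by (simp add: mat2_def)
next
  case F1: False
  show ?thesis
  proof (cases "v \<in> jv ` {1..r}")
    case True
    then obtain l where l: "l \<in> {1..r}" "v = jv l" by blast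
    then have "v \<in> J - I" using IJ2 by blast
    then show ?thesis using XX_jv[OF l(1)] l(2) by (simp add: mat2_def)
  next
    case False
    then have "\<not> (\<exists>l\<in>{1..r}. v = iv l)" "\<not> (\<exists>l\<in>{1..r}. v = jv l)" "v \<notin> I - J" "v \<notin> J - I"
      using F1 IJ1 IJ2 by blast+
    then show ?thesis unfolding MX_def by (simp add: mat_def)
  qed
qed

end

lemma sum_pairs: "(\<Sum>l=1..2*(r::nat). (f l :: 'a::comm_monoid_add)) = (\<Sum>l=1..r. f (2*l-1) + f (2*l)) "
proof (induction r)
  case 0 then show ?case by simp
next
  case (Suc r)
  have "2 * Suc r = Suc (Suc (2*r))" by simp
  then show ?case using Suc by (simp only: sum.cl_ivl_Suc) (simp add: add.assoc)
qed

context mdat begin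

definition "pp l = (if l = 0 then 0 else jv l)"
definition "SS l = (\<Sum>l'=1..l. b (2*l'-1) + b (2*l'))"

lemma gapX:
  assumes "a + d \<le> n" "\<forall>j\<in>{1..d}. a+j \<notin> iv`{1..r} \<and> a+j \<notin> jv`{1..r}"
  shows "\<exists>g. xpath n XX a d = mat g"
proof (rule gap_generic, rule ballI)
  fix j assume j: "j \<in> {1..d}"
  then have "cyc n (a+j) = a+j" using assms(1) by (intro cyc_id) auto
  then show "\<exists>g. XX (cyc n (a + j)) = mat g" using XX_other assms(2) j by simp
qed

lemma G1: assumes "l < r" "pp l < u" "u < iv (Suc l)"
  shows "u \<notin> iv`{1..r} \<and> u \<notin> jv`{1..r}"
proof -
  have sl: "Suc l \<in> {1..r}" using assms by auto
  have "False" if "l'' \<in> {1..r}" "u = iv l''" for l''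
  proof -
    have "l'' < Suc l" using iffs(5)[OF that(1) sl] assms that by simp
    then have "l \<in> {1..r}" using that assms by auto
    then have "l < l''" using iffs(4)[OF _ that(1), of l] assms that by (simp add: pp_def)
    then show False using \<open>l'' < Suc l\<close> by simp
  qed
  moreover have "False" if "l'' \<in> {1..r}" "u = jv l''" for l''
  proof -
    have "l'' < Suc l" using iffs(4)[OF that(1) sl] assms that by simp
    then have "l \<in> {1..r}" using that assms by auto
    then have "l < l''" using iffs(6)[OF _ that(1), of l] assms that by (simp add: pp_def)
    then show False using \<open>l'' < Suc l\<close> by simp
  qed
  ultimately show ?thesis by blast
qed

lemma G2: assumes "Suc l \<in> {1..r}" "iv (Suc l) < u" "u < jv (Suc l)"
  shows "u \<notin> iv`{1..r} \<and> u \<notin> jv`{1..r}"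
proof -
  have "False" if "l'' \<in> {1..r}" "u = iv l''" for l''
    using iffs(5)[OF assms(1) that(1)] iffs(3)[OF that(1) assms(1)] assms that by simp
  moreover have "False" if "l'' \<in> {1..r}" "u = jv l''" for l''
    using iffs(3)[OF assms(1) that(1)] iffs(6)[OF that(1) assms(1)] assms that by simp
  ultimately show ?thesis by blast
qed

lemma G3: assumes "pp r < u"
  shows "u \<notin> iv`{1..r} \<and> u \<notin> jv`{1..r}"
proof -
  have "False" if "l'' \<in> {1..r}" "u = iv l''" for l''
  proof -
    have r: "r \<in> {1..r}" using that by auto
    show False using iffs(4)[OF r that(1)] assms that by (simp add: pp_def)
  qed
  moreover have "False" if "l'' \<in> {1..r}" "u = jv l''" for l''
  proof -
    have r: "r \<in> {1..r}" using that by auto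
    show False using iffs(6)[OF r that(1)] assms that by (simp add: pp_def)
  qed
  ultimately show ?thesis by blast
qed

lemma claim: "l \<le> r \<Longrightarrow> \<exists>A D w. xpath n XX 0 (pp l) = mat2 A (w * SS l) 0 D
      \<and> (l = 0 \<longrightarrow> D = 1) \<and> (0 < l \<longrightarrow> D = fps_X * w)"
proof (induction l)
  case 0 then show ?case by (simp add: pp_def SS_def mat_mat2 mat2_eq)
next
  case (Suc l)
  then obtain A D w where M: "xpath n XX 0 (pp l) = mat2 A (w * SS l) 0 D"
    and D0: "l = 0 \<longrightarrow> D = 1" and D1: "0 < l \<longrightarrow> D = fps_X * w" by auto
  have sl: "Suc l \<in> {1..r}" using Suc.prems by auto
  define i' where "i' = iv (Suc l)"
  define j' where "j' = jv (Suc l)"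
  have ij: "i' < j'" "j' \<le> n" "1 \<le> i'" using ord1 sl by (auto simp: i'_def j'_def)
  have pl: "pp l < i'"
  proof (cases "l = 0")
    case True then show ?thesis using ij by (simp add: pp_def)
  next
    case False then have "l \<in> {1..r}" using Suc.prems by auto
    then show ?thesis using iffs(4)[OF _ sl, of l] False by (simp add: pp_def i'_def)
  qed
  define e1 where "e1 = i' - pp l - 1"
  define e2 where "e2 = j' - i' - 1"
  have gp1: "\<forall>j\<in>{1..e1}. pp l + j \<notin> iv`{1..r} \<and> pp l + j \<notin> jv`{1..r}"
  proof
    fix j assume j: "j \<in> {1..e1}"
    show "pp l + j \<notin> iv`{1..r} \<and> pp l + j \<notin> jv`{1..r}"
    proof (rule G1)
      show "l < r" using Suc.prems by simp
      show "pp l < pp l + j" using j by simp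
      show "pp l + j < iv (Suc l)" using j pl unfolding e1_def i'_def by (simp; linarith)
    qed
  qed
  have gp2: "\<forall>j\<in>{1..e2}. i' + j \<notin> iv`{1..r} \<and> i' + j \<notin> jv`{1..r}"
  proof
    fix j assume j: "j \<in> {1..e2}"
    show "i' + j \<notin> iv`{1..r} \<and> i' + j \<notin> jv`{1..r}"
    proof (rule G2[OF sl])
      show "iv (Suc l) < i' + j" using j unfolding i'_def by simp
      show "i' + j < jv (Suc l)" using j ij unfolding e2_def j'_def by (simp; linarith)
    qed
  qed
  have "pp l + e1 \<le> n" using pl ij unfolding e1_def by linarith
  then obtain g1 where g1: "xpath n XX (pp l) e1 = mat g1"
    using gapX[OF _ gp1] by blast
  have "i' + e2 \<le> n" using ij unfolding e2_def by linarith
  then obtain g2 where g2: "xpath n XX i' e2 = mat g2"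
    using gapX[OF _ gp2] by blast
  have x1: "xpath n XX 0 i' = (XX i' ** mat g1) ** xpath n XX 0 (pp l)"
  proof -
    have "xpath n XX 0 (pp l + Suc e1) = xpath n XX (pp l) (Suc e1) ** xpath n XX 0 (pp l)"
      using xpath_split[of n XX 0 "pp l" "Suc e1"] by (simp only: add_0)
    also have "xpath n XX (pp l) (Suc e1) = XX (cyc n (pp l + Suc e1)) ** xpath n XX (pp l) e1"
      by (simp only: xpath.simps)
    also have "pp l + Suc e1 = i'" using pl by (simp add: e1_def)
    also have "cyc n i' = i'" using ij by (intro cyc_id) auto
    finally show ?thesis using g1 by simp
  qed
  have x2: "xpath n XX 0 j' = (XX j' ** mat g2) ** xpath n XX 0 i'"
  proof -
    have "xpath n XX 0 (i' + Suc e2) = xpath n XX i' (Suc e2) ** xpath n XX 0 i'"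
      using xpath_split[of n XX 0 i' "Suc e2"] by (simp only: add_0)
    also have "xpath n XX i' (Suc e2) = XX (cyc n (i' + Suc e2)) ** xpath n XX i' e2"
      by (simp only: xpath.simps)
    also have "i' + Suc e2 = j'" using ij by (simp add: e2_def)
    also have "cyc n j' = j'" using ij by (intro cyc_id) auto
    finally show ?thesis using g2 by simp
  qed
  have SS: "SS (Suc l) = SS l + (b (2 * Suc l - 1) + b (2 * Suc l))"
    by (simp add: SS_def)
  have e: "xpath n XX 0 (pp (Suc l)) =
     mat2 (g2 * fps_X * g1 * A)
      (g1 * g2 * (fps_X * (w * SS l) + (b (2 * Suc l - 1) + b (2 * Suc l)) * D)) 0
      (fps_X * (g1 * g2 * D))"
  proof -
    have "xpath n XX 0 (pp (Suc l)) = (XX j' ** mat g2) ** ((XX i' ** mat g1) ** mat2 A (w*SS l) 0 D)"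
      using x1 x2 M by (simp add: pp_def j'_def)
    also have "\<dots> = mat2 1 (b (2 * Suc l)) 0 fps_X ** mat2 g2 0 0 g2 ** (mat2 fps_X (b (2 * Suc l - 1)) 0 1 ** mat2 g1 0 0 g1 ** mat2 A (w*SS l) 0 D)"
      by (simp only: XX_iv[OF sl, folded i'_def] XX_jv[OF sl, folded j'_def] mat_mat2)
    also have "\<dots> = mat2 (g2 * fps_X * g1 * A)
      (g1 * g2 * (fps_X * (w * SS l) + (b (2 * Suc l - 1) + b (2 * Suc l)) * D)) 0
      (fps_X * (g1 * g2 * D))"
      unfolding mat2_mult mat2_eq by (simp add: algebra_simps)
    finally show ?thesis .
  qed
  show ?case
  proof (cases "l = 0")
    case True
    have S0: "SS l = 0" using True by (simp add: SS_def)
    show ?thesis unfolding e SS mat2_eq using True D0 S0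
      by (intro exI[of _ "g2 * fps_X * g1 * A"] exI[of _ "fps_X * (g1 * g2 * D)"] exI[of _ "g1 * g2"])
        (simp add: algebra_simps)
  next
    case False
    show ?thesis unfolding e SS mat2_eq using False D1
      by (intro exI[of _ "g2 * fps_X * g1 * A"] exI[of _ "fps_X * (g1 * g2 * D)"] exI[of _ "g1 * g2 * fps_X * w"])
        (simp add: algebra_simps)
  qed
qed


lemma prod_count:
  assumes "K \<subseteq> {1..n}" "card K = k"
  shows "(\<Prod>j\<in>{1..n}. (if j \<in> K then 1 else fps_X)) = (fps_X ^ (n - k) :: complex fps)"
proof -
  have "(\<Prod>j\<in>{1..n}. (if j \<in> K then 1 else fps_X)) = (\<Prod>j\<in>{1..n} - K. (fps_X :: complex fps))"
    by (rule prod.mono_neutral_cong_right) auto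
  also have "\<dots> = fps_X ^ card ({1..n} - K)" by simp
  also have "card ({1..n} - K) = n - k" using assms by (simp add: card_Diff_subset finite_subset)
  finally show ?thesis .
qed

lemma loop0:
  assumes "I \<subseteq> {1..n}" "J \<subseteq> {1..n}" "card I = k" "card J = k"
    and bsum: "(\<Sum>l=1..2*r. b l) = 0"
  shows "xpath n XX 0 n = mat (fps_X^(n-k))"
proof -
  obtain A D w where M: "xpath n XX 0 (pp r) = mat2 A (w * SS r) 0 D" using claim[of r] by auto
  have S0: "SS r = 0" using bsum unfolding SS_def sum_pairs by simp
  have ppr: "pp r \<le> n" using jv_le[of r] by (cases "r = 0") (auto simp: pp_def)
  have gp: "\<forall>j\<in>{1..n - pp r}. pp r + j \<notin> iv`{1..r} \<and> pp r + j \<notin> jv`{1..r}"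
    by (intro ballI G3) auto
  have "pp r + (n - pp r) \<le> n" using ppr by simp
  then obtain g where g: "xpath n XX (pp r) (n - pp r) = mat g" using gapX[OF _ gp] by blast
  have "xpath n XX 0 (pp r + (n - pp r)) = xpath n XX (pp r) (n - pp r) ** xpath n XX 0 (pp r)"
    using xpath_split[of n XX 0 "pp r" "n - pp r"] by (simp only: add_0)
  then have P: "xpath n XX 0 n = mat2 (g*A) 0 0 (g*D)"
    using ppr g M S0 by (simp add: mat_mat2 mat2_mult)
  have dg: "xpath n XX 0 n $ 1 $ 1 = (\<Prod>j\<in>{1..n}. XX (cyc n (0+j)) $ 1 $ 1)"
     "xpath n XX 0 n $ 2 $ 2 = (\<Prod>j\<in>{1..n}. XX (cyc n (0+j)) $ 2 $ 2)"
    using diag_generic[of XX n 0 n] MX21 by blast+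
  have "(\<Prod>j\<in>{1..n}. XX (cyc n (0+j)) $ 1 $ 1) = (\<Prod>j\<in>{1..n}. (if j \<in> J then 1 else fps_X))"
    by (rule prod.cong) (auto simp: cyc_id XX_diag)
  also have "\<dots> = fps_X^(n-k)" using prod_count assms by blast
  finally have d1: "g * A = fps_X^(n-k)" using dg(1) P by (simp add: mat2_def)
  have "(\<Prod>j\<in>{1..n}. XX (cyc n (0+j)) $ 2 $ 2) = (\<Prod>j\<in>{1..n}. (if j \<in> I then 1 else fps_X))"
    by (rule prod.cong) (auto simp: cyc_id XX_diag)
  also have "\<dots> = fps_X^(n-k)" using prod_count assms by blast
  finally have d2: "g * D = fps_X^(n-k)" using dg(2) P by (simp add: mat2_def)
  show ?thesis unfolding P d1 d2 mat_mat2 ..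
qed

end

theorem proposition3p1:
  fixes k n r :: nat and I J :: "nat set" and iv jv :: "nat \<Rightarrow> nat"
    and b :: "nat \<Rightarrow> complex fps"
  assumes "1 \<le> k" and "k \<le> n - 1"
    and "I \<subseteq> {1..n}" and "J \<subseteq> {1..n}" and "card I = k" and "card J = k"
    and "tightly_r_interlacing k r I J"
    and "I - J = iv ` {1..r}" and "J - I = jv ` {1..r}"
    and "\<forall>l\<in>{1..r}. 1 \<le> iv l \<and> iv l < jv l \<and> jv l \<le> n"
    and "\<forall>l\<in>{1..<r}. jv l < iv (Suc l)"
    and "(\<Sum>l=1..2*r. b l) = 0"
  shows "CM_rep k n (MX I J r iv jv b) (MY I J r iv jv b)"
proof -
  interpret mdat n r I J iv jv b
    by unfold_locales (use assms in auto)
  have n: "0 < n" and k: "k \<le> n" using assms(1,2) by auto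
  have L: "xpath n (MX I J r iv jv b) 0 n = mat (fps_X^(n-k))"
    using loop0 assms(3-6,12) by blast
  show ?thesis unfolding CM_rep_def
    using main_abstract[OF MXY_all(1) MXY_all(2) n k L] by (simp add: MXY_all)
qed

end
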